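(* Let $4\leq m\leq n$ be integers and suppose there exists a generalized quadrangle of order $(m,n)$. Let $m_1\leq n_1$ be integers with $3\le m_1\leq m$ and $n_1\leq n$. Then there exist $(m_1,n_1;8)$-bipartite biregular graphs of order $(m_1+n_1)mn$.
   Context: A generalized quadrangle is a finite point-line incidence geometry whose incidence (Levi) graph — the bipartite graph on points and lines with a point adjacent to a line iff incident — is connected, of diameter 4 and girth 8. It has order $(s,t)$ if each line has exactly $s+1$ points and each point lies on exactly $t+1$ lines. For integers $a,b\geq 2$ and even $g\ge4$, an $(a,b;g)$-bipartite biregular graph is a finite simple bipartite graph of girth exactly $g$ in which all vertices of one bipartition class have degree $a$ and all vertices of the other class have degree $b$. *)

theory Defs
  imports Main
begin

definition simple_graph :: "'v set \<Rightarrow> ('v \<Rightarrow> 'v \<Rightarrow> bool) \<Rightarrow> bool" where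
  "simple_graph V E \<longleftrightarrow> finite V \<and> (\<forall>u v. E u v \<longrightarrow> u \<in> V \<and> v \<in> V)
     \<and> (\<forall>u v. E u v \<longrightarrow> E v u) \<and> (\<forall>v. \<not> E v v)"

text \<open>A walk is a nonempty vertex list with consecutive vertices adjacent;
its length is the number of edges, i.e. length xs - 1.\<close>

definition is_walk :: "'v set \<Rightarrow> ('v \<Rightarrow> 'v \<Rightarrow> bool) \<Rightarrow> 'v list \<Rightarrow> bool" where
  "is_walk V E xs \<longleftrightarrow> xs \<noteq> [] \<and> set xs \<subseteq> V
     \<and> (\<forall>i. Suc i < length xs \<longrightarrow> E (xs ! i) (xs ! Suc i))"

definition dist_le :: "'v set \<Rightarrow> ('v \<Rightarrow> 'v \<Rightarrow> bool) \<Rightarrow> 'v \<Rightarrow> 'v \<Rightarrow> nat \<Rightarrow> bool" where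
  "dist_le V E u v k \<longleftrightarrow> (\<exists>xs. is_walk V E xs \<and> hd xs = u \<and> last xs = v \<and> length xs \<le> Suc k)"

definition connected_graph :: "'v set \<Rightarrow> ('v \<Rightarrow> 'v \<Rightarrow> bool) \<Rightarrow> bool" where
  "connected_graph V E \<longleftrightarrow> V \<noteq> {} \<and> (\<forall>u\<in>V. \<forall>v\<in>V. \<exists>k. dist_le V E u v k)"

definition has_diameter :: "'v set \<Rightarrow> ('v \<Rightarrow> 'v \<Rightarrow> bool) \<Rightarrow> nat \<Rightarrow> bool" where
  "has_diameter V E d \<longleftrightarrow> (\<forall>u\<in>V. \<forall>v\<in>V. dist_le V E u v d)
     \<and> (\<exists>u\<in>V. \<exists>v\<in>V. \<forall>k<d. \<not> dist_le V E u v k)"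

definition is_cycle :: "'v set \<Rightarrow> ('v \<Rightarrow> 'v \<Rightarrow> bool) \<Rightarrow> 'v list \<Rightarrow> bool" where
  "is_cycle V E xs \<longleftrightarrow> length xs \<ge> 3 \<and> distinct xs \<and> is_walk V E xs \<and> E (last xs) (hd xs)"

definition has_girth :: "'v set \<Rightarrow> ('v \<Rightarrow> 'v \<Rightarrow> bool) \<Rightarrow> nat \<Rightarrow> bool" where
  "has_girth V E g \<longleftrightarrow> (\<exists>xs. is_cycle V E xs \<and> length xs = g)
     \<and> (\<forall>xs. is_cycle V E xs \<longrightarrow> g \<le> length xs)"

definition degree :: "'v set \<Rightarrow> ('v \<Rightarrow> 'v \<Rightarrow> bool) \<Rightarrow> 'v \<Rightarrow> nat" where
  "degree V E v = card {u \<in> V. E v u}"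

definition levi_vertices :: "'p set \<Rightarrow> 'l set \<Rightarrow> ('p + 'l) set" where
  "levi_vertices P L = Inl ` P \<union> Inr ` L"

fun levi_adj :: "'p set \<Rightarrow> 'l set \<Rightarrow> ('p \<Rightarrow> 'l \<Rightarrow> bool) \<Rightarrow> 'p + 'l \<Rightarrow> 'p + 'l \<Rightarrow> bool" where
  "levi_adj P L I (Inl p) (Inr l) = (p \<in> P \<and> l \<in> L \<and> I p l)"
| "levi_adj P L I (Inr l) (Inl p) = (p \<in> P \<and> l \<in> L \<and> I p l)"
| "levi_adj P L I _ _ = False"

definition generalized_quadrangle :: "'p set \<Rightarrow> 'l set \<Rightarrow> ('p \<Rightarrow> 'l \<Rightarrow> bool) \<Rightarrow> bool" where
  "generalized_quadrangle P L I \<longleftrightarrow> finite P \<and> finite L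
     \<and> connected_graph (levi_vertices P L) (levi_adj P L I)
     \<and> has_diameter (levi_vertices P L) (levi_adj P L I) 4
     \<and> has_girth (levi_vertices P L) (levi_adj P L I) 8"

definition gq_order :: "'p set \<Rightarrow> 'l set \<Rightarrow> ('p \<Rightarrow> 'l \<Rightarrow> bool) \<Rightarrow> nat \<Rightarrow> nat \<Rightarrow> bool" where
  "gq_order P L I s t \<longleftrightarrow> generalized_quadrangle P L I
     \<and> (\<forall>l\<in>L. card {p \<in> P. I p l} = s + 1)
     \<and> (\<forall>p\<in>P. card {l \<in> L. I p l} = t + 1)"

definition bipartite_biregular :: "'v set \<Rightarrow> ('v \<Rightarrow> 'v \<Rightarrow> bool) \<Rightarrow> nat \<Rightarrow> nat \<Rightarrow> nat \<Rightarrow> bool" where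
  "bipartite_biregular V E a b g \<longleftrightarrow> a \<ge> 2 \<and> b \<ge> 2 \<and> even g \<and> g \<ge> 4
     \<and> simple_graph V E
     \<and> (\<exists>A B. A \<inter> B = {} \<and> A \<union> B = V
          \<and> (\<forall>u v. E u v \<longrightarrow> (u \<in> A \<and> v \<in> B) \<or> (u \<in> B \<and> v \<in> A))
          \<and> (\<forall>v\<in>A. degree V E v = a) \<and> (\<forall>v\<in>B. degree V E v = b))
     \<and> has_girth V E g"

end

theory Submission
  imports Defs
begin

definition inc :: "'p set \<Rightarrow> 'l set \<Rightarrow> ('p \<Rightarrow> 'l \<Rightarrow> bool) \<Rightarrow> 'p \<Rightarrow> 'l \<Rightarrow> bool" where
  "inc P L I x k \<longleftrightarrow> x \<in> P \<and> k \<in> L \<and> I x k"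

definition coll :: "'p set \<Rightarrow> 'l set \<Rightarrow> ('p \<Rightarrow> 'l \<Rightarrow> bool) \<Rightarrow> 'p \<Rightarrow> 'p \<Rightarrow> bool" where
  "coll P L I a b \<longleftrightarrow> (\<exists>k. inc P L I a k \<and> inc P L I b k)"

definition Aset :: "'p set \<Rightarrow> 'l set \<Rightarrow> ('p \<Rightarrow> 'l \<Rightarrow> bool) \<Rightarrow> 'p \<Rightarrow> 'l \<Rightarrow> 'p set \<Rightarrow> 'p set" where
  "Aset P L I p l S = {q \<in> P. \<not> coll P L I p q \<and> (\<exists>y\<in>S. coll P L I y q)}"

definition dual_rel :: "('p \<Rightarrow> 'l \<Rightarrow> bool) \<Rightarrow> 'l \<Rightarrow> 'p \<Rightarrow> bool" where
  "dual_rel I k x = I x k"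

lemma inc_dual[simp]: "inc L P (dual_rel I) k x = inc P L I x k"
  by (auto simp: inc_def dual_rel_def)

lemma coll_dual: "coll L P (dual_rel I) M k = (\<exists>x. inc P L I x M \<and> inc P L I x k)"
  by (simp add: coll_def)


lemma levi_adj_sym: "levi_adj P L I u v = levi_adj P L I v u"
  by (cases u; cases v) auto

lemma levi_adj_irrefl: "\<not> levi_adj P L I u u"
  by (cases u) auto

lemma is_cycle_mono:
  assumes "is_cycle V E xs" "V \<subseteq> V'" "\<And>u v. E u v \<Longrightarrow> E' u v"
  shows "is_cycle V' E' xs"
  using assms unfolding is_cycle_def is_walk_def by blast

lemma ext_subset:
  assumes "finite U" "C \<subseteq> U" "card C \<le> k" "k \<le> card U"
  shows "\<exists>S. C \<subseteq> S \<and> S \<subseteq> U \<and> card S = k"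
proof -
  have fC: "finite C" using assms finite_subset by auto
  have "card (U - C) = card U - card C" using assms fC by (simp add: card_Diff_subset)
  then have "k - card C \<le> card (U - C)" using assms by simp
  then obtain R where R: "R \<subseteq> U - C" "card R = k - card C" "finite R"
    using obtain_subset_with_card_n by metis
  have "card (C \<union> R) = card C + card R" using R fC by (intro card_Un_disjoint) auto
  then show ?thesis using R assms by (intro exI[of _ "C \<union> R"]) auto
qed

locale gq =
  fixes P :: "'p set" and L :: "'l set" and I :: "'p \<Rightarrow> 'l \<Rightarrow> bool" and m n :: nat
  assumes finP: "finite P" and finL: "finite L"
    and no4: "\<And>a b k k'. \<lbrakk>a \<noteq> b; k \<noteq> k'; inc P L I a k; inc P L I b k; inc P L I a k'\<rbrakk> \<Longrightarrow> \<not> inc P L I b k'"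
    and no6: "\<And>a b c K1 K2 K3. \<lbrakk>a \<noteq> b; b \<noteq> c; a \<noteq> c; K1 \<noteq> K2; K2 \<noteq> K3; K1 \<noteq> K3;
        inc P L I a K1; inc P L I b K1; inc P L I b K2; inc P L I c K2; inc P L I c K3\<rbrakk> \<Longrightarrow> \<not> inc P L I a K3"
    and proj: "\<And>x k. \<lbrakk>x \<in> P; k \<in> L; \<not> inc P L I x k\<rbrakk> \<Longrightarrow> \<exists>k' y. inc P L I x k' \<and> inc P L I y k' \<and> inc P L I y k"
    and cardL: "\<And>k. k \<in> L \<Longrightarrow> card {x\<in>P. I x k} = m + 1"
    and cardP: "\<And>x. x \<in> P \<Longrightarrow> card {k\<in>L. I x k} = n + 1"
begin

abbreviation ic where "ic \<equiv> inc P L I"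
abbreviation cl where "cl \<equiv> coll P L I"

lemma gq_dual: "gq L P (dual_rel I) n m"
proof
  show "finite L" "finite P" by (rule finL, rule finP)
next
  fix a b k k'
  assume "a \<noteq> b" "k \<noteq> k'" "inc L P (dual_rel I) a k" "inc L P (dual_rel I) b k" "inc L P (dual_rel I) a k'"
  then show "\<not> inc L P (dual_rel I) b k'" using no4[of k k' a b] by auto
next
  fix a b c K1 K2 K3
  assume "a \<noteq> b" "b \<noteq> c" "a \<noteq> c" "K1 \<noteq> K2" "K2 \<noteq> K3" "K1 \<noteq> K3"
    "inc L P (dual_rel I) a K1" "inc L P (dual_rel I) b K1" "inc L P (dual_rel I) b K2"
    "inc L P (dual_rel I) c K2" "inc L P (dual_rel I) c K3"
  then show "\<not> inc L P (dual_rel I) a K3" using no6[of K1 K2 K3 b c a] by auto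
next
  fix x k assume "x \<in> L" "k \<in> P" "\<not> inc L P (dual_rel I) x k"
  then obtain k' y where "ic k k'" "ic y k'" "ic y x" using proj[of k x] by auto
  then show "\<exists>k' y. inc L P (dual_rel I) x k' \<and> inc L P (dual_rel I) y k' \<and> inc L P (dual_rel I) y k"
    by auto
next
  fix k assume "k \<in> P" then show "card {x \<in> L. dual_rel I x k} = n + 1"
    using cardP[of k] by (simp add: dual_rel_def)
next
  fix x assume "x \<in> L" then show "card {k \<in> P. dual_rel I x k} = m + 1"
    using cardL[of x] by (simp add: dual_rel_def)
qed

lemma tri:
  assumes "a \<noteq> b" "b \<noteq> c" "a \<noteq> c" "ic a K1" "ic b K1" "ic b K2" "ic c K2" "ic c K3" "ic a K3"
  shows "K1 = K2 \<and> K2 = K3"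
proof (cases "K1 = K2")
  case True
  then show ?thesis using assms no4[of a c K1 K3] by auto
next
  case False
  show ?thesis
  proof (cases "K2 = K3")
    case True
    then show ?thesis using assms False no4[of a b K1 K2] by auto
  next
    case F2: False
    show ?thesis
    proof (cases "K1 = K3")
      case True
      then show ?thesis using assms F2 no4[of b c K2 K1] by auto
    next
      case False
      then show ?thesis using assms F2 \<open>K1 \<noteq> K2\<close> no6[of a b c K1 K2 K3] by auto
    qed
  qed
qed

lemma tri3:
  assumes "a \<noteq> b" "b \<noteq> c" "a \<noteq> c" "ic a K1" "ic b K1" "ic b K2" "ic c K2" "ic c K3" "ic a K3"
  shows "K1 = K2" "K2 = K3" "K1 = K3"
  using tri[OF assms] by auto

end

locale gqf = gq + fixes p l assumes flag: "inc P L I p l"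
begin

lemma gqf_dual: "gqf L P (dual_rel I) n m l p"
  using gq_dual flag by (simp add: gqf_def gqf_axioms_def)

lemma P1:
  assumes "q \<in> P" "\<not> cl p q" "ic y l" "ic y' l" "cl y q" "cl y' q"
  shows "y = y'"
proof (rule ccontr)
  assume ne: "y \<noteq> y'"
  have qy: "q \<noteq> y"
  proof
    assume "q = y"
    then have "cl p q" using flag assms(3) unfolding coll_def by blast
    then show False using assms(2) by simp
  qed
  have qy': "q \<noteq> y'"
  proof
    assume "q = y'"
    then have "cl p q" using flag assms(4) unfolding coll_def by blast
    then show False using assms(2) by simp
  qed
  from assms(5) obtain K3 where K3: "ic y K3" "ic q K3" unfolding coll_def by blast
  from assms(6) obtain K2 where K2: "ic y' K2" "ic q K2" unfolding coll_def by blast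
  have "l = K2" by (rule tri3(1)[of y y' q l K2 K3]) (use ne qy qy' assms(3,4) K2 K3 in auto)
  then have "cl p q" using flag K2 unfolding coll_def by blast
  then show False using assms(2) by simp
qed

lemma U2:
  assumes "q \<noteq> q'" "ic q k" "ic q' k" "cl y q" "cl y q'" "ic y l" "\<not> (\<exists>z. ic z l \<and> ic z k)"
  shows False
proof -
  have yq: "y \<noteq> q" using assms(2,6,7) by blast
  have yq': "y \<noteq> q'" using assms(3,6,7) by blast
  from assms(4) obtain K3 where K3: "ic y K3" "ic q K3" unfolding coll_def by blast
  from assms(5) obtain K2 where K2: "ic y K2" "ic q' K2" unfolding coll_def by blast
  have "k = K2" by (rule tri3(1)[of q q' y k K2 K3]) (use assms(1,2,3) yq yq' K2 K3 in auto)
  then show False using assms(6,7) K2 by blast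
qed

lemma F2:
  assumes "k \<in> L" "\<not> (\<exists>z. ic z l \<and> ic z k)" "ic y l" "y \<noteq> p"
  shows "\<exists>q. ic q k \<and> cl y q \<and> \<not> cl p q"
proof -
  have nyk: "\<not> ic y k" using assms(2,3) by blast
  have yP: "y \<in> P" using assms(3) by (simp add: inc_def)
  obtain k' q where k': "ic y k'" "ic q k'" "ic q k" using proj[OF yP assms(1) nyk] by blast
  have "\<not> cl p q"
  proof
    assume "cl p q"
    then obtain N where N: "ic p N" "ic q N" unfolding coll_def by blast
    have qp: "q \<noteq> p" using assms(2) flag k'(3) by blast
    have qy: "q \<noteq> y" using nyk k'(3) by blast
    have "l = k'" by (rule tri3(1)[of p y q l k' N]) (use assms(3,4) flag k' N qp qy in auto)
    then show False using assms(2) k'(2,3) by blast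
  qed
  then show ?thesis using k' unfolding coll_def by blast
qed

lemma card_Ly:
  assumes "ic y l"
  shows "card {k\<in>L. I y k \<and> k \<noteq> l} = n"
proof -
  have "{k\<in>L. I y k \<and> k \<noteq> l} = {k\<in>L. I y k} - {l}" by auto
  moreover have "l \<in> {k\<in>L. I y k}" using assms by (auto simp: inc_def)
  moreover have "finite {k\<in>L. I y k}" using finL by auto
  ultimately show ?thesis using cardP[of y] assms by (simp add: inc_def)
qed

lemma card_Dk:
  assumes "ic y k"
  shows "card {q\<in>P. I q k \<and> q \<noteq> y} = m"
proof -
  have "{q\<in>P. I q k \<and> q \<noteq> y} = {q\<in>P. I q k} - {y}" by auto
  moreover have "y \<in> {q\<in>P. I q k}" using assms by (auto simp: inc_def)
  moreover have "finite {q\<in>P. I q k}" using finP by auto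
  ultimately show ?thesis using cardL[of k] assms by (simp add: inc_def)
qed

lemma card_C:
  assumes "ic y l" "y \<noteq> p"
  shows "card {q\<in>P. \<not> cl p q \<and> cl y q} = n * m"
proof -
  let ?Ly = "{k\<in>L. I y k \<and> k \<noteq> l}"
  let ?D = "\<lambda>k. {q\<in>P. I q k \<and> q \<noteq> y}"
  have eq: "{q\<in>P. \<not> cl p q \<and> cl y q} = \<Union> (?D ` ?Ly)"
  proof
    show "{q\<in>P. \<not> cl p q \<and> cl y q} \<subseteq> \<Union> (?D ` ?Ly)"
    proof
      fix q assume q: "q \<in> {q\<in>P. \<not> cl p q \<and> cl y q}"
      then obtain k where k: "ic y k" "ic q k" unfolding coll_def by auto
      have "q \<noteq> y" using q assms flag unfolding coll_def by auto
      have "k \<noteq> l" using q k flag unfolding coll_def by auto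
      show "q \<in> \<Union> (?D ` ?Ly)" using k \<open>q \<noteq> y\<close> \<open>k \<noteq> l\<close> by (auto simp: inc_def)
    qed
  next
    show "\<Union> (?D ` ?Ly) \<subseteq> {q\<in>P. \<not> cl p q \<and> cl y q}"
    proof
      fix q assume "q \<in> \<Union> (?D ` ?Ly)"
      then obtain k where k: "k \<in> L" "I y k" "k \<noteq> l" "q \<in> P" "I q k" "q \<noteq> y" by auto
      have yP: "y \<in> P" using assms by (simp add: inc_def)
      have ik: "ic y k" "ic q k" using k yP by (auto simp: inc_def)
      have "\<not> cl p q"
      proof
        assume "cl p q"
        then obtain N where N: "ic p N" "ic q N" unfolding coll_def by auto
        have "q \<noteq> p"
        proof
          assume "q = p"
          then show False using no4[of p y k l] ik flag assms k by auto
        qed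
        have "l = k" using tri3(1)[of p y q l k N] assms flag ik N \<open>q \<noteq> p\<close> k by auto
        then show False using k by auto
      qed
      then show "q \<in> {q\<in>P. \<not> cl p q \<and> cl y q}" using ik k unfolding coll_def by auto
    qed
  qed
  have "card (\<Union> (?D ` ?Ly)) = (\<Sum>k\<in>?Ly. card (?D k))"
  proof (rule card_UN_disjoint)
    show "finite ?Ly" using finL by auto
    show "\<forall>k\<in>?Ly. finite (?D k)" using finP by auto
    show "\<forall>i\<in>?Ly. \<forall>j\<in>?Ly. i \<noteq> j \<longrightarrow> ?D i \<inter> ?D j = {}"
    proof (intro ballI impI)
      fix i j assume ij: "i \<in> ?Ly" "j \<in> ?Ly" "i \<noteq> j"
      show "?D i \<inter> ?D j = {}"
      proof (rule ccontr)
        assume "?D i \<inter> ?D j \<noteq> {}"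
        then obtain q where "q \<in> ?D i" "q \<in> ?D j" by blast
        then show False using no4[of y q i j] ij assms by (auto simp: inc_def)
      qed
    qed
  qed
  also have "\<dots> = (\<Sum>k\<in>?Ly. m)"
  proof (rule sum.cong)
    fix k assume "k \<in> ?Ly"
    then show "card (?D k) = m" using card_Dk[of y k] assms by (auto simp: inc_def)
  qed simp
  also have "\<dots> = n * m" using card_Ly[OF assms(1)] by simp
  finally show ?thesis using eq by simp
qed

lemma card_A:
  assumes "S \<subseteq> {y. ic y l \<and> y \<noteq> p}"
  shows "card (Aset P L I p l S) = card S * (m * n)"
proof -
  let ?C = "\<lambda>y. {q\<in>P. \<not> cl p q \<and> cl y q}"
  have eq: "Aset P L I p l S = \<Union> (?C ` S)" unfolding Aset_def by auto
  have finS: "finite S"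
    by (rule finite_subset[OF _ finite_subset[OF _ finP]]) (use assms in \<open>auto simp: inc_def\<close>)
  have "card (\<Union> (?C ` S)) = (\<Sum>y\<in>S. card (?C y))"
  proof (rule card_UN_disjoint)
    show "finite S" by (rule finS)
    show "\<forall>y\<in>S. finite (?C y)" using finP by auto
    show "\<forall>i\<in>S. \<forall>j\<in>S. i \<noteq> j \<longrightarrow> ?C i \<inter> ?C j = {}"
    proof (intro ballI impI)
      fix i j assume ij: "i \<in> S" "j \<in> S" "i \<noteq> j"
      show "?C i \<inter> ?C j = {}"
      proof (rule ccontr)
        assume "?C i \<inter> ?C j \<noteq> {}"
        then obtain q where "q \<in> ?C i" "q \<in> ?C j" by blast
        then show False using P1[of q i j] ij assms by auto
      qed
    qed
  qed
  also have "\<dots> = (\<Sum>y\<in>S. n * m)"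
    by (rule sum.cong) (use assms card_C in auto)
  finally show ?thesis using eq by simp
qed

lemma deg_A:
  assumes "k \<in> L" "\<not> (\<exists>z. ic z l \<and> ic z k)" "S \<subseteq> {y. ic y l \<and> y \<noteq> p}"
  shows "card {q \<in> Aset P L I p l S. ic q k} = card S"
proof -
  define g where "g y = (THE q. ic q k \<and> cl y q)" for y
  have gp: "ic (g y) k \<and> cl y (g y) \<and> \<not> cl p (g y)" if yS: "y \<in> S" for y
  proof -
    have yl: "ic y l" "y \<noteq> p" using yS assms(3) by auto
    obtain q where q: "ic q k" "cl y q" "\<not> cl p q" using F2[OF assms(1,2) yl] by blast
    have u: "q' = q" if qq: "ic q' k \<and> cl y q'" for q'
    proof (rule ccontr)
      assume "q' \<noteq> q"
      from U2[OF this conjunct1[OF qq] q(1) conjunct2[OF qq] q(2) yl(1) assms(2)] show False .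
    qed
    have "g y = q" unfolding g_def
    proof (rule the_equality)
      show "ic q k \<and> cl y q" using q by blast
      show "\<And>q'. ic q' k \<and> cl y q' \<Longrightarrow> q' = q" by (rule u)
    qed
    then show ?thesis using q by simp
  qed
  have guniq: "g y = q" if yq: "y \<in> S" "ic q k" "cl y q" for y q
  proof (rule ccontr)
    assume ne: "g y \<noteq> q"
    have yl: "ic y l" using yq(1) assms(3) by auto
    have g: "ic (g y) k" "cl y (g y)" using gp[OF yq(1)] by auto
    show False using U2[OF ne g(1) yq(2) g(2) yq(3) yl assms(2)] .
  qed
  have "bij_betw g S {q \<in> Aset P L I p l S. ic q k}"
  proof (rule bij_betw_imageI)
    show "inj_on g S"
    proof (rule inj_onI)
      fix y y' assume yy: "y \<in> S" "y' \<in> S" "g y = g y'"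
      have a1: "ic (g y) k" "cl y (g y)" "\<not> cl p (g y)" using gp[OF yy(1)] by auto
      have a2: "cl y' (g y)" using gp[OF yy(2)] yy(3) by simp
      have gP: "g y \<in> P" using a1(1) by (simp add: inc_def)
      have yl: "ic y l" "ic y' l" using yy(1,2) assms(3) by auto
      show "y = y'" by (rule P1[OF gP a1(3) yl a1(2) a2])
    qed
    show "g ` S = {q \<in> Aset P L I p l S. ic q k}"
    proof
      show "g ` S \<subseteq> {q \<in> Aset P L I p l S. ic q k}"
      proof
        fix q assume "q \<in> g ` S"
        then obtain y where y: "y \<in> S" "q = g y" by blast
        have a1: "ic q k" "cl y q" "\<not> cl p q" using gp[OF y(1)] y(2) by auto
        have "q \<in> P" using a1(1) by (simp add: inc_def)
        then show "q \<in> {q \<in> Aset P L I p l S. ic q k}" unfolding Aset_def using a1 y(1) by blast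
      qed
      show "{q \<in> Aset P L I p l S. ic q k} \<subseteq> g ` S"
      proof
        fix q assume "q \<in> {q \<in> Aset P L I p l S. ic q k}"
        then obtain y where y: "y \<in> S" "cl y q" "ic q k" unfolding Aset_def by blast
        have "g y = q" by (rule guniq[OF y(1) y(3) y(2)])
        then show "q \<in> g ` S" using y(1) by blast
      qed
    qed
  qed
  then show ?thesis by (simp add: bij_betw_same_card)
qed


lemma memA: "q \<in> P \<Longrightarrow> \<not> cl p q \<Longrightarrow> y \<in> S \<Longrightarrow> cl y q \<Longrightarrow> q \<in> Aset P L I p l S"
  unfolding Aset_def by blast

lemma memB: "k \<in> L \<Longrightarrow> \<not> (\<exists>z. ic z l \<and> ic z k) \<Longrightarrow> M \<in> T \<Longrightarrow> (\<exists>x. ic x M \<and> ic x k)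
   \<Longrightarrow> k \<in> Aset L P (dual_rel I) l p T"
  unfolding Aset_def coll_dual by blast

lemma icP: "ic q k \<Longrightarrow> q \<in> P" by (simp add: inc_def)
lemma icL: "ic q k \<Longrightarrow> k \<in> L" by (simp add: inc_def)

lemma F1:
  assumes "q \<in> P" "\<not> cl p q" "ic p M" "M \<noteq> l"
  shows "\<exists>k. ic q k \<and> (\<exists>x. ic x M \<and> ic x k) \<and> \<not> (\<exists>z. ic z l \<and> ic z k)"
  using gqf.F2[OF gqf_dual, of q M] assms by (simp add: coll_def)

lemma P1d:
  assumes "k \<in> L" "\<not> (\<exists>z. ic z l \<and> ic z k)" "ic p M" "ic p M'"
    "\<exists>x. ic x M \<and> ic x k" "\<exists>x. ic x M' \<and> ic x k"
  shows "M = M'"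
  using gqf.P1[OF gqf_dual, of k M M'] assms by (simp add: coll_def)

lemma two_elems:
  assumes "2 \<le> card A"
  obtains a b where "a \<in> A" "b \<in> A" "a \<noteq> b"
proof -
  obtain T where "T \<subseteq> A" "card T = 2" using obtain_subset_with_card_n[OF assms] by metis
  then show ?thesis using that by (auto simp: card_2_iff)
qed

lemma card_ys: "card {y. ic y l \<and> y \<noteq> p} = m"
proof -
  have "{y. ic y l \<and> y \<noteq> p} = {q\<in>P. I q l \<and> q \<noteq> p}" using flag by (auto simp: inc_def)
  then show ?thesis using card_Dk[OF flag] by simp
qed

lemma card_Ms: "card {M. ic p M \<and> M \<noteq> l} = n"
proof -
  have "{M. ic p M \<and> M \<noteq> l} = {k\<in>L. I p k \<and> k \<noteq> l}" using flag by (auto simp: inc_def)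
  then show ?thesis using card_Ly[OF flag] by simp
qed

lemma eight:
  assumes "2 \<le> m" "2 \<le> n"
  shows "\<exists>q1 q2 q3 q4 k1 k2 k3 k4 Y Ms. Y \<subseteq> {y. ic y l \<and> y \<noteq> p} \<and> card Y \<le> 3
    \<and> Ms \<subseteq> {M. ic p M \<and> M \<noteq> l} \<and> card Ms \<le> 3
    \<and> (\<forall>S T. Y \<subseteq> S \<longrightarrow> Ms \<subseteq> T \<longrightarrow> {q1,q2,q3,q4} \<subseteq> Aset P L I p l S
                 \<and> {k1,k2,k3,k4} \<subseteq> Aset L P (dual_rel I) l p T)
    \<and> distinct [q1,q2,q3,q4] \<and> distinct [k1,k2,k3,k4]
    \<and> ic q1 k1 \<and> ic q2 k1 \<and> ic q2 k2 \<and> ic q3 k2 \<and> ic q3 k3 \<and> ic q4 k3 \<and> ic q4 k4 \<and> ic q1 k4"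
proof -
  obtain y1 y2 where y: "y1 \<in> {y. ic y l \<and> y \<noteq> p}" "y2 \<in> {y. ic y l \<and> y \<noteq> p}" "y1 \<noteq> y2"
    using two_elems[of "{y. ic y l \<and> y \<noteq> p}"] card_ys assms by metis
  obtain M1 M2 where M: "M1 \<in> {M. ic p M \<and> M \<noteq> l}" "M2 \<in> {M. ic p M \<and> M \<noteq> l}" "M1 \<noteq> M2"
    using two_elems[of "{M. ic p M \<and> M \<noteq> l}"] card_Ms assms by metis
  have "card {q\<in>P. \<not> cl p q \<and> cl y1 q} = n * m" using card_C y by auto
  then have "{q\<in>P. \<not> cl p q \<and> cl y1 q} \<noteq> {}" using assms by (intro notI) simp
  then obtain q1 where q1: "q1 \<in> P" "\<not> cl p q1" "cl y1 q1" by blast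
  obtain k1 where k1: "ic q1 k1" "\<exists>x. ic x M1 \<and> ic x k1" "\<not> (\<exists>z. ic z l \<and> ic z k1)"
    using F1[OF q1(1,2), of M1] M by auto
  obtain k4 where k4: "ic q1 k4" "\<exists>x. ic x M2 \<and> ic x k4" "\<not> (\<exists>z. ic z l \<and> ic z k4)"
    using F1[OF q1(1,2), of M2] M by auto
  obtain q2 where q2: "ic q2 k1" "cl y2 q2" "\<not> cl p q2"
    using F2[of k1 y2] k1 y by (auto simp: inc_def)
  obtain q4 where q4: "ic q4 k4" "cl y2 q4" "\<not> cl p q4"
    using F2[of k4 y2] k4 y by (auto simp: inc_def)
  obtain k2 where k2: "ic q2 k2" "\<exists>x. ic x M2 \<and> ic x k2" "\<not> (\<exists>z. ic z l \<and> ic z k2)"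
    using F1[of q2 M2] q2 M by (auto simp: inc_def)
  have q12: "q1 \<noteq> q2" using P1[of q1 y1 y2] q1 q2 y by auto
  have q14: "q1 \<noteq> q4" using P1[of q1 y1 y2] q1 q4 y by auto
  have k14: "k1 \<noteq> k4" using P1d[of k1 M1 M2] k1 k4 M by (auto simp: inc_def)
  have k12: "k1 \<noteq> k2" using P1d[of k1 M1 M2] k1 k2 M by (auto simp: inc_def)
  have q24: "q2 \<noteq> q4" using no4[of q1 q2 k1 k4] q12 k14 k1 k4 q2 q4 by auto
  have nc24: "\<not> cl q2 q4"
  proof
    assume "cl q2 q4"
    then obtain K where K: "ic q2 K" "ic q4 K" unfolding coll_def by auto
    show False using tri3(3)[of q1 q2 q4 k1 K k4] q12 q24 q14 k1 k4 q2 q4 K k14 by auto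
  qed
  have q4k2: "\<not> ic q4 k2" using nc24 k2 unfolding coll_def by auto
  obtain k3 q3 where kq3: "ic q4 k3" "ic q3 k3" "ic q3 k2"
    using proj[of q4 k2] q4k2 q4 k2 by (auto simp: inc_def)
  have q32: "q3 \<noteq> q2" using nc24 kq3 unfolding coll_def by auto
  have q34: "q3 \<noteq> q4" using q4k2 kq3 by auto
  have q31: "q3 \<noteq> q1" using no4[of q1 q2 k1 k2] q12 k12 k1 q2 k2 kq3 by auto
  have k24: "k2 \<noteq> k4" using no4[of q1 q2 k1 k4] q12 k14 k1 k4 q2 k2 by auto
  have k32: "k3 \<noteq> k2" using q4k2 kq3 by auto
  have k31: "k3 \<noteq> k1" using nc24 kq3 q2 unfolding coll_def by auto
  have k34: "k3 \<noteq> k4"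
  proof
    assume "k3 = k4"
    then show False using tri3(1)[of q1 q2 q3 k1 k2 k4] q12 q32 q31 k1 k4 q2 k2 kq3 k12 by auto
  qed
  have q3A: "\<not> cl p q3"
  proof
    assume "cl p q3"
    then obtain N where N: "ic p N" "ic q3 N" unfolding coll_def by auto
    obtain x where x: "ic x M2" "ic x k2" using k2 by auto
    have px: "p \<noteq> x" using x k2 flag by auto
    have pq3: "p \<noteq> q3" using kq3 k2 flag by auto
    have "q3 = x"
    proof (rule ccontr)
      assume "q3 \<noteq> x"
      then have "M2 = k2" using tri3(1)[of p x q3 M2 k2 N] px pq3 M x kq3 N by auto
      then show False using M k2 flag by auto
    qed
    obtain x' where x': "ic x' M2" "ic x' k4" using k4 by auto
    show False
    proof (cases "x' = q3")
      case True
      then show False using no4[of q3 q4 k3 k4] q34 k34 kq3 x' q4 by auto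
    next
      case False
      have "x' \<noteq> q4" using x' q4 M unfolding coll_def by auto
      then have "M2 = k4" using tri3(1)[of q3 x' q4 M2 k4 k3] False q34 \<open>q3 = x\<close> x x' q4 kq3 by auto
      then show False using M k4 flag by auto
    qed
  qed
  have k3B: "\<not> (\<exists>z. ic z l \<and> ic z k3)"
  proof
    assume "\<exists>z. ic z l \<and> ic z k3"
    then obtain z where z: "ic z l" "ic z k3" by auto
    have "cl z q4" using z kq3 unfolding coll_def by auto
    then have "z = y2" using P1[of q4 z y2] q4 z y by (auto simp: inc_def)
    then have "cl y2 q3" using z kq3 unfolding coll_def by auto
    then show False using U2[of q2 q3 k2 y2] q32 k2 kq3 q2 y by auto
  qed
  have q3l: "\<not> ic q3 l" using q3A flag unfolding coll_def by auto
  obtain k' y3 where y3': "ic q3 k'" "ic y3 k'" "ic y3 l"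
    using proj[of q3 l] q3l kq3 flag by (auto simp: inc_def)
  have y3: "y3 \<in> {y. ic y l \<and> y \<noteq> p}" "cl y3 q3" using y3' q3A unfolding coll_def by auto
  have pk3: "\<not> ic p k3" using k3B flag by auto
  obtain M3 x where M3': "ic p M3" "ic x M3" "ic x k3"
    using proj[of p k3] pk3 flag kq3 by (auto simp: inc_def)
  have M3: "M3 \<in> {M. ic p M \<and> M \<noteq> l}" using M3' k3B by auto
  have M3x: "\<exists>x. ic x M3 \<and> ic x k3" using M3'(2,3) by blast
  define Y where "Y = {y1, y2, y3}"
  define Ms where "Ms = {M1, M2, M3}"
  have cY: "card Y \<le> 3" unfolding Y_def by (simp add: card_insert_if)
  have cM: "card Ms \<le> 3" unfolding Ms_def by (simp add: card_insert_if)
  have memb: "{q1,q2,q3,q4} \<subseteq> Aset P L I p l S \<and> {k1,k2,k3,k4} \<subseteq> Aset L P (dual_rel I) l p T"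
    if "Y \<subseteq> S" "Ms \<subseteq> T" for S T
  proof -
    have "y1 \<in> S" "y2 \<in> S" "y3 \<in> S" using that unfolding Y_def by auto
    moreover have "M1 \<in> T" "M2 \<in> T" "M3 \<in> T" using that unfolding Ms_def by auto
    ultimately show ?thesis
      using memA[OF q1(1,2) _ q1(3)] memA[OF icP[OF q2(1)] q2(3) _ q2(2)]
        memA[OF icP[OF kq3(2)] q3A _ y3(2)] memA[OF icP[OF q4(1)] q4(3) _ q4(2)]
        memB[OF icL[OF k1(1)] k1(3) _ k1(2)] memB[OF icL[OF k2(1)] k2(3) _ k2(2)]
        memB[OF icL[OF kq3(2)] k3B _ M3x] memB[OF icL[OF k4(1)] k4(3) _ k4(2)]
      by simp
  qed
  show ?thesis
    apply (rule exI[of _ q1], rule exI[of _ q2], rule exI[of _ q3], rule exI[of _ q4])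
    apply (rule exI[of _ k1], rule exI[of _ k2], rule exI[of _ k3], rule exI[of _ k4])
    apply (rule exI[of _ Y], rule exI[of _ Ms])
    using y y3 M M3 cY cM memb q12 q14 q24 q32 q34 q31 k12 k14 k24 k32 k31 k34
      k1 k2 k4 q2 q4 kq3 unfolding Y_def Ms_def by auto
qed


lemma build:
  assumes girth: "\<forall>xs. is_cycle (levi_vertices P L) (levi_adj P L I) xs \<longrightarrow> 8 \<le> length xs"
    and h: "3 \<le> m1" "m1 \<le> m" "m1 \<le> n1" "n1 \<le> n"
  shows "\<exists>X E. X \<subseteq> levi_vertices P L \<and> bipartite_biregular X E m1 n1 8 \<and> card X = (m1 + n1) * m * n"
proof -
  have m2: "2 \<le> m" and n2: "2 \<le> n" using h by auto
  obtain q1 q2 q3 q4 k1 k2 k3 k4 Y Ms where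
    Y: "Y \<subseteq> {y. ic y l \<and> y \<noteq> p}" "card Y \<le> 3" and
    Ms: "Ms \<subseteq> {M. ic p M \<and> M \<noteq> l}" "card Ms \<le> 3" and
    memb: "\<forall>S T. Y \<subseteq> S \<longrightarrow> Ms \<subseteq> T \<longrightarrow> {q1,q2,q3,q4} \<subseteq> Aset P L I p l S
                 \<and> {k1,k2,k3,k4} \<subseteq> Aset L P (dual_rel I) l p T" and
    dq: "distinct [q1,q2,q3,q4]" and dk: "distinct [k1,k2,k3,k4]" and
    inc8: "ic q1 k1" "ic q2 k1" "ic q2 k2" "ic q3 k2" "ic q3 k3" "ic q4 k3" "ic q4 k4" "ic q1 k4"
    using eight[OF m2 n2] by (elim exE conjE) (rule that; assumption)
  have finys: "finite {y. ic y l \<and> y \<noteq> p}"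
    by (rule finite_subset[OF _ finP]) (auto simp: inc_def)
  have finMs: "finite {M. ic p M \<and> M \<noteq> l}"
    by (rule finite_subset[OF _ finL]) (auto simp: inc_def)
  obtain S where S: "Y \<subseteq> S" "S \<subseteq> {y. ic y l \<and> y \<noteq> p}" "card S = m1"
    using ext_subset[OF finys Y(1), of m1] Y h card_ys by auto
  obtain T where T: "Ms \<subseteq> T" "T \<subseteq> {M. ic p M \<and> M \<noteq> l}" "card T = n1"
    using ext_subset[OF finMs Ms(1), of n1] Ms h card_Ms by auto
  define A where "A = Aset P L I p l S"
  define B where "B = Aset L P (dual_rel I) l p T"
  have AP: "A \<subseteq> P" and BL: "B \<subseteq> L" unfolding A_def B_def Aset_def by auto
  have finA: "finite A" using AP finP finite_subset by auto
  have finB: "finite B" using BL finL finite_subset by auto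
  have cA: "card A = m1 * (m * n)" unfolding A_def using card_A[OF S(2)] S(3) by simp
  have Td: "T \<subseteq> {y. inc L P (dual_rel I) y p \<and> y \<noteq> l}" using T(2) by auto
  have cB: "card B = n1 * (n * m)" unfolding B_def using gqf.card_A[OF gqf_dual Td] T(3) by simp
  define X where "X = Inl ` A \<union> Inr ` B"
  define E where "E = (\<lambda>u v. u \<in> X \<and> v \<in> X \<and> levi_adj P L I u v)"
  have finX: "finite X" unfolding X_def using finA finB by auto
  have cX: "card X = (m1 + n1) * m * n"
  proof -
    have "card (Inl ` A \<union> Inr ` B) = card A + card B"
      using finA finB by (subst card_Un_disjoint) (auto simp: card_image)
    then show ?thesis unfolding X_def using cA cB by (simp add: algebra_simps)
  qed
  have degB: "degree X E (Inr k) = m1" if "k \<in> B" for k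
  proof -
    have kL: "k \<in> L" and nm: "\<not> (\<exists>z. ic z l \<and> ic z k)"
      using that unfolding B_def Aset_def by (auto simp: coll_def)
    have "{u \<in> X. E (Inr k) u} = Inl ` {q \<in> A. ic q k}"
      using that unfolding E_def X_def by (auto simp: inc_def)
    then have "degree X E (Inr k) = card {q \<in> A. ic q k}"
      unfolding degree_def by (simp add: card_image)
    also have "\<dots> = m1" unfolding A_def using deg_A[OF kL nm S(2)] S(3) by simp
    finally show ?thesis .
  qed
  have degA: "degree X E (Inl q) = n1" if "q \<in> A" for q
  proof -
    have qP: "q \<in> P" and nm: "\<not> (\<exists>z. inc L P (dual_rel I) z p \<and> inc L P (dual_rel I) z q)"
      using that unfolding A_def Aset_def by (auto simp: coll_def)
    have "{u \<in> X. E (Inl q) u} = Inr ` {k \<in> B. ic q k}"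
      using that unfolding E_def X_def by (auto simp: inc_def)
    then have "degree X E (Inl q) = card {k \<in> B. ic q k}"
      unfolding degree_def by (simp add: card_image)
    also have "\<dots> = n1" unfolding B_def using gqf.deg_A[OF gqf_dual qP nm Td] T(3) by simp
    finally show ?thesis .
  qed
  have sg: "simple_graph X E"
    unfolding simple_graph_def
  proof (intro conjI)
    show "finite X" by (rule finX)
    show "\<forall>u v. E u v \<longrightarrow> u \<in> X \<and> v \<in> X" unfolding E_def by simp
    show "\<forall>u v. E u v \<longrightarrow> E v u" unfolding E_def by (simp add: levi_adj_sym)
    show "\<forall>v. \<not> E v v" unfolding E_def by (simp add: levi_adj_irrefl)
  qed
  have bip: "\<forall>u v. E u v \<longrightarrow> (u \<in> Inr ` B \<and> v \<in> Inl ` A) \<or> (u \<in> Inl ` A \<and> v \<in> Inr ` B)"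
    unfolding E_def X_def by auto
  have XV: "X \<subseteq> levi_vertices P L" unfolding X_def levi_vertices_def using AP BL by auto
  have low: "\<forall>xs. is_cycle X E xs \<longrightarrow> 8 \<le> length xs"
  proof (intro allI impI)
    fix xs assume "is_cycle X E xs"
    then have "is_cycle (levi_vertices P L) (levi_adj P L I) xs"
      by (rule is_cycle_mono[OF _ XV]) (simp add: E_def)
    then show "8 \<le> length xs" using girth by auto
  qed
  have qA: "{q1,q2,q3,q4} \<subseteq> A" and kB: "{k1,k2,k3,k4} \<subseteq> B"
    using memb S(1) T(1) unfolding A_def B_def by auto
  define cyc where "cyc = [Inl q1, Inr k1, Inl q2, Inr k2, Inl q3, Inr k3, Inl q4, Inr k4]"
  have Eall: "E (Inl q1) (Inr k1)" "E (Inr k1) (Inl q2)" "E (Inl q2) (Inr k2)" "E (Inr k2) (Inl q3)"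
    "E (Inl q3) (Inr k3)" "E (Inr k3) (Inl q4)" "E (Inl q4) (Inr k4)" "E (Inr k4) (Inl q1)"
    using qA kB inc8 unfolding E_def X_def by (auto simp: inc_def)
  have walk: "\<forall>i. Suc i < length cyc \<longrightarrow> E (cyc ! i) (cyc ! Suc i)"
  proof (intro allI impI)
    fix i assume "Suc i < length cyc"
    then have "i < 7" unfolding cyc_def by simp
    then have "i = 0 \<or> i = 1 \<or> i = 2 \<or> i = 3 \<or> i = 4 \<or> i = 5 \<or> i = 6" by arith
    then show "E (cyc ! i) (cyc ! Suc i)" unfolding cyc_def using Eall by auto
  qed
  have "is_cycle X E cyc"
    unfolding is_cycle_def is_walk_def using walk dq dk qA kB Eall unfolding cyc_def X_def by auto
  moreover have "length cyc = 8" unfolding cyc_def by simp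
  ultimately have gir: "has_girth X E 8" unfolding has_girth_def using low by blast
  have "bipartite_biregular X E m1 n1 8"
    unfolding bipartite_biregular_def
    using h sg gir degA degB bip
    apply (intro conjI)
    apply simp_all
    apply (rule exI[of _ "Inr ` B"], rule exI[of _ "Inl ` A"])
    unfolding X_def by auto
  then show ?thesis using cX XV by blast
qed

end

lemma adj3:
  assumes "levi_adj P L I (Inl x) a1" "levi_adj P L I a1 (Inr k)"
  shows "\<exists>k' y. inc P L I x k' \<and> inc P L I y k' \<and> inc P L I y k"
  using assms by (cases a1) (auto simp: inc_def)

lemma adj2: "\<not> (levi_adj P L I (Inl x) a1 \<and> levi_adj P L I a1 (Inr k))"
  by (cases a1) auto

lemma adj4:
  assumes "levi_adj P L I (Inl x) a1" "levi_adj P L I a1 a2" "levi_adj P L I a2 (Inr k)"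
  shows "\<exists>k' y. inc P L I x k' \<and> inc P L I y k' \<and> inc P L I y k"
  using assms by (cases a1; cases a2) (auto simp: inc_def)

lemma adj5: "\<not> (levi_adj P L I (Inl x) a1 \<and> levi_adj P L I a1 a2 \<and> levi_adj P L I a2 a3 \<and> levi_adj P L I a3 (Inr k))"
  by (cases a1; cases a2; cases a3) auto

lemma from_order:
  assumes "gq_order P L I m n"
  shows "gq P L I m n"
proof -
  let ?V = "levi_vertices P L" and ?E = "levi_adj P L I"
  have G: "generalized_quadrangle P L I" using assms by (simp add: gq_order_def)
  then have finP: "finite P" and finL: "finite L" and diam: "has_diameter ?V ?E 4"
    and gir: "has_girth ?V ?E 8" by (auto simp: generalized_quadrangle_def)
  have low: "8 \<le> length xs" if "is_cycle ?V ?E xs" for xs using gir that by (auto simp: has_girth_def)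
  show ?thesis
  proof
    show "finite P" "finite L" by (rule finP, rule finL)
  next
    fix a b k k'
    assume h: "a \<noteq> b" "k \<noteq> k'" "inc P L I a k" "inc P L I b k" "inc P L I a k'"
    show "\<not> inc P L I b k'"
    proof
      assume h2: "inc P L I b k'"
      let ?c = "[Inl a, Inr k, Inl b, Inr k'] :: ('a + 'b) list"
      have w: "\<forall>i. Suc i < length ?c \<longrightarrow> ?E (?c ! i) (?c ! Suc i)"
      proof (intro allI impI)
        fix i assume "Suc i < length ?c"
        then have "i = 0 \<or> i = 1 \<or> i = 2" by auto
        then show "?E (?c ! i) (?c ! Suc i)" using h h2 by (auto simp: inc_def)
      qed
      have "is_cycle ?V ?E ?c"
        unfolding is_cycle_def is_walk_def using w h h2 by (auto simp: inc_def levi_vertices_def)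
      then show False using low by fastforce
    qed
  next
    fix a b c K1 K2 K3
    assume h: "a \<noteq> b" "b \<noteq> c" "a \<noteq> c" "K1 \<noteq> K2" "K2 \<noteq> K3" "K1 \<noteq> K3"
        "inc P L I a K1" "inc P L I b K1" "inc P L I b K2" "inc P L I c K2" "inc P L I c K3"
    show "\<not> inc P L I a K3"
    proof
      assume h2: "inc P L I a K3"
      let ?c = "[Inl a, Inr K1, Inl b, Inr K2, Inl c, Inr K3] :: ('a + 'b) list"
      have w: "\<forall>i. Suc i < length ?c \<longrightarrow> ?E (?c ! i) (?c ! Suc i)"
      proof (intro allI impI)
        fix i assume "Suc i < length ?c"
        then have "i = 0 \<or> i = 1 \<or> i = 2 \<or> i = 3 \<or> i = 4" by auto
        then show "?E (?c ! i) (?c ! Suc i)" using h h2 by (auto simp: inc_def)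
      qed
      have "is_cycle ?V ?E ?c"
        unfolding is_cycle_def is_walk_def using w h h2 by (auto simp: inc_def levi_vertices_def)
      then show False using low by fastforce
    qed
  next
    fix x k assume h: "x \<in> P" "k \<in> L" "\<not> inc P L I x k"
    have "dist_le ?V ?E (Inl x) (Inr k) 4"
      using diam h by (auto simp: has_diameter_def levi_vertices_def)
    then obtain xs where xs: "is_walk ?V ?E xs" "hd xs = Inl x" "last xs = Inr k" "length xs \<le> 5"
      unfolding dist_le_def by auto
    have ne: "xs \<noteq> []" using xs is_walk_def by auto
    have adj: "?E (xs ! i) (xs ! Suc i)" if "Suc i < length xs" for i
      using xs(1) that unfolding is_walk_def by auto
    have h0: "xs ! 0 = Inl x" using xs(2) ne by (simp add: hd_conv_nth)
    have hN: "xs ! (length xs - 1) = Inr k" using xs(3) ne by (simp add: last_conv_nth)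
    have "length xs = 1 \<or> length xs = 2 \<or> length xs = 3 \<or> length xs = 4 \<or> length xs = 5"
    proof -
      have "0 < length xs" using ne by simp
      then show ?thesis using xs(4) by linarith
    qed
    then show "\<exists>k' y. inc P L I x k' \<and> inc P L I y k' \<and> inc P L I y k"
    proof (elim disjE)
      assume "length xs = 1" then show ?thesis using h0 hN by simp
    next
      assume l: "length xs = 2"
      then show ?thesis using adj[of 0] h0 hN h by (simp add: inc_def)
    next
      assume l: "length xs = 3"
      then show ?thesis using adj[of 0] adj[of 1] h0 hN adj2[of P L I x "xs!1" k] by (simp add: numeral_eq_Suc)
    next
      assume l: "length xs = 4"
      then have "?E (Inl x) (xs!1)" "?E (xs!1) (xs!2)" "?E (xs!2) (Inr k)"
        using adj[of 0] adj[of 1] adj[of 2] h0 hN by (simp_all add: numeral_eq_Suc)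
      then show ?thesis by (rule adj4)
    next
      assume l: "length xs = 5"
      then have "?E (Inl x) (xs!1)" "?E (xs!1) (xs!2)" "?E (xs!2) (xs!3)" "?E (xs!3) (Inr k)"
        using adj[of 0] adj[of 1] adj[of 2] adj[of 3] h0 hN by (simp_all add: numeral_eq_Suc)
      then show ?thesis using adj5 by metis
    qed
  next
    fix k assume "k \<in> L" then show "card {x \<in> P. I x k} = m + 1" using assms by (simp add: gq_order_def)
  next
    fix x assume "x \<in> P" then show "card {k \<in> L. I x k} = n + 1" using assms by (simp add: gq_order_def)
  qed
qed


lemma transfer_nat:
  assumes bb: "bipartite_biregular (X :: 'v set) E a b g"
  shows "\<exists>(V :: nat set) E'. bipartite_biregular V E' a b g \<and> card V = card X"
proof -
  have sg: "simple_graph X E" using bb by (simp add: bipartite_biregular_def)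
  then have finX: "finite X" by (simp add: simple_graph_def)
  obtain h where bij: "bij_betw h X {0..<card X}" using ex_bij_betw_finite_nat[OF finX] by blast
  define V where "V = h ` X"
  define gi where "gi = inv_into X h"
  define E' where "E' = (\<lambda>u v. u \<in> V \<and> v \<in> V \<and> E (gi u) (gi v))"
  have inj: "inj_on h X" using bij bij_betw_def by auto
  have gh: "gi (h x) = x" if "x \<in> X" for x unfolding gi_def using inj that by simp
  have hg: "h (gi u) = u" if "u \<in> V" for u using that unfolding gi_def V_def by (rule f_inv_into_f)
  have gV: "gi u \<in> X" if "u \<in> V" for u using that unfolding gi_def V_def by (rule inv_into_into)
  have injg: "inj_on gi V" unfolding V_def gi_def by (rule inj_on_inv_into) simp
  have cV: "card V = card X" unfolding V_def using inj by (simp add: card_image)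
  have Esup: "E u v \<Longrightarrow> u \<in> X \<and> v \<in> X" for u v using sg by (simp add: simple_graph_def)
  have E'h: "E' (h x) (h y) = E x y" if "x \<in> X" "y \<in> X" for x y
    unfolding E'_def V_def using that gh by auto
  have sg': "simple_graph V E'"
    using sg finX unfolding simple_graph_def E'_def V_def by auto
  obtain A B where AB: "A \<inter> B = {}" "A \<union> B = X"
    "\<forall>u v. E u v \<longrightarrow> (u \<in> A \<and> v \<in> B) \<or> (u \<in> B \<and> v \<in> A)"
    "\<forall>v\<in>A. degree X E v = a" "\<forall>v\<in>B. degree X E v = b"
    using bb unfolding bipartite_biregular_def by blast
  have deg: "degree V E' (h x) = degree X E x" if "x \<in> X" for x
  proof -
    have "{u \<in> V. E' (h x) u} = h ` {w \<in> X. E x w}"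
    proof
      show "{u \<in> V. E' (h x) u} \<subseteq> h ` {w \<in> X. E x w}"
      proof
        fix u assume u: "u \<in> {u \<in> V. E' (h x) u}"
        then have "E x (gi u)" "gi u \<in> X" unfolding E'_def using gh that gV by auto
        then show "u \<in> h ` {w \<in> X. E x w}" using hg u by (metis (mono_tags, lifting) image_eqI mem_Collect_eq)
      qed
      show "h ` {w \<in> X. E x w} \<subseteq> {u \<in> V. E' (h x) u}"
        using E'h that unfolding V_def by auto
    qed
    moreover have "inj_on h {w \<in> X. E x w}" using inj by (rule inj_on_subset) auto
    ultimately show ?thesis unfolding degree_def by (simp add: card_image)
  qed
  have bip': "\<exists>A B. A \<inter> B = {} \<and> A \<union> B = V
          \<and> (\<forall>u v. E' u v \<longrightarrow> (u \<in> A \<and> v \<in> B) \<or> (u \<in> B \<and> v \<in> A))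
          \<and> (\<forall>v\<in>A. degree V E' v = a) \<and> (\<forall>v\<in>B. degree V E' v = b)"
  proof (intro exI conjI)
    show "h ` A \<inter> h ` B = {}" using AB inj inj_on_image_Int[of h X A B] by auto
    show "h ` A \<union> h ` B = V" using AB unfolding V_def by auto
    show "\<forall>u v. E' u v \<longrightarrow> (u \<in> h ` A \<and> v \<in> h ` B) \<or> (u \<in> h ` B \<and> v \<in> h ` A)"
    proof (intro allI impI)
      fix u v assume "E' u v"
      then have uv: "u \<in> V" "v \<in> V" "E (gi u) (gi v)" unfolding E'_def by auto
      then show "(u \<in> h ` A \<and> v \<in> h ` B) \<or> (u \<in> h ` B \<and> v \<in> h ` A)"
        using AB(3) hg by (metis image_eqI)
    qed
    show "\<forall>v\<in>h ` A. degree V E' v = a" using AB deg by auto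
    show "\<forall>v\<in>h ` B. degree V E' v = b" using AB deg by auto
  qed
  have cyc1: "is_cycle X E (map gi ys)" if "is_cycle V E' ys" for ys
  proof -
    have ne: "ys \<noteq> []" using that by (auto simp: is_cycle_def is_walk_def)
    have "set ys \<subseteq> V" using that by (auto simp: is_cycle_def is_walk_def)
    then have injy: "inj_on gi (set ys)" by (rule inj_on_subset[OF injg])
    show ?thesis using that injy gV ne unfolding is_cycle_def is_walk_def E'_def
      by (auto simp: distinct_map hd_map last_map subset_iff)
  qed
  have cyc2: "is_cycle V E' (map h xs)" if "is_cycle X E xs" for xs
  proof -
    have ne: "xs \<noteq> []" using that by (auto simp: is_cycle_def is_walk_def)
    have sub: "set xs \<subseteq> X" using that by (auto simp: is_cycle_def is_walk_def)
    have di: "distinct (map h xs)" using that inj sub by (auto simp: is_cycle_def distinct_map intro: inj_on_subset)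
    have "\<forall>i. Suc i < length xs \<longrightarrow> E' (h (xs ! i)) (h (xs ! Suc i))"
    proof (intro allI impI)
      fix i assume i: "Suc i < length xs"
      then have "xs ! i \<in> X" "xs ! Suc i \<in> X" using sub nth_mem[of i xs] nth_mem[of "Suc i" xs] by auto
      moreover have "E (xs ! i) (xs ! Suc i)" using that i by (auto simp: is_cycle_def is_walk_def)
      ultimately show "E' (h (xs ! i)) (h (xs ! Suc i))" using E'h by simp
    qed
    moreover have "E' (h (last xs)) (h (hd xs))"
    proof -
      have "last xs \<in> X" "hd xs \<in> X" using sub ne last_in_set[OF ne] hd_in_set[OF ne] by auto
      moreover have "E (last xs) (hd xs)" using that by (simp add: is_cycle_def)
      ultimately show ?thesis using E'h by simp
    qed
    ultimately show ?thesis using that di sub ne unfolding is_cycle_def is_walk_def V_def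
      by (auto simp: hd_map last_map)
  qed
  have gir: "has_girth X E g" using bb by (simp add: bipartite_biregular_def)
  have gir': "has_girth V E' g"
    unfolding has_girth_def
  proof (intro conjI allI impI)
    obtain xs where "is_cycle X E xs" "length xs = g" using gir has_girth_def by blast
    then show "\<exists>xs. is_cycle V E' xs \<and> length xs = g" using cyc2 by (intro exI[of _ "map h xs"]) auto
  next
    fix ys assume "is_cycle V E' ys"
    then show "g \<le> length ys" using cyc1 gir unfolding has_girth_def by fastforce
  qed
  have "bipartite_biregular V E' a b g"
    using bb sg' bip' gir' unfolding bipartite_biregular_def by blast
  then show ?thesis using cV by blast
qed

theorem mainTheorem5:
  fixes P :: "'p set" and L :: "'l set" and I :: "'p \<Rightarrow> 'l \<Rightarrow> bool"
    and m n m1 n1 :: nat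
  assumes "4 \<le> m" and "m \<le> n"
    and "gq_order P L I m n"
    and "3 \<le> m1" and "m1 \<le> m" and "m1 \<le> n1" and "n1 \<le> n"
  shows "\<exists>(V :: nat set) E. bipartite_biregular V E m1 n1 8 \<and> card V = (m1 + n1) * m * n"
proof -
  interpret gq P L I m n by (rule from_order[OF assms(3)])
  have G: "generalized_quadrangle P L I" using assms(3) by (simp add: gq_order_def)
  then have gir: "\<forall>xs. is_cycle (levi_vertices P L) (levi_adj P L I) xs \<longrightarrow> 8 \<le> length xs"
    by (auto simp: generalized_quadrangle_def has_girth_def)
  have "levi_vertices P L \<noteq> {}" using G by (simp add: generalized_quadrangle_def connected_graph_def)
  then have "P \<noteq> {} \<or> L \<noteq> {}" by (auto simp: levi_vertices_def)
  then obtain p l where pl: "inc P L I p l"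
  proof (elim disjE)
    assume "P \<noteq> {}"
    then obtain p where p: "p \<in> P" by auto
    then have c: "card {k\<in>L. I p k} = n + 1" by (rule cardP)
    have "{k\<in>L. I p k} \<noteq> {}"
    proof
      assume "{k\<in>L. I p k} = {}"
      then have "card {k\<in>L. I p k} = 0" by (simp only: card.empty)
      then show False using c by simp
    qed
    then show thesis using that p by (auto simp: inc_def)
  next
    assume "L \<noteq> {}"
    then obtain l where l: "l \<in> L" by auto
    then have c: "card {x\<in>P. I x l} = m + 1" by (rule cardL)
    have "{x\<in>P. I x l} \<noteq> {}"
    proof
      assume "{x\<in>P. I x l} = {}"
      then have "card {x\<in>P. I x l} = 0" by (simp only: card.empty)
      then show False using c by simp
    qed
    then show thesis using that l by (auto simp: inc_def)
  qed
  interpret gqf P L I m n p l by unfold_locales (rule pl)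
  obtain X :: "('p + 'l) set" and E where "bipartite_biregular X E m1 n1 8" "card X = (m1 + n1) * m * n"
    using build[OF gir assms(4-7)] by (elim exE conjE) (rule that; assumption)
  then show ?thesis using transfer_nat by metis
qed

end
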